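(* Let $(\sigma,\rho)\in GL_n(\mathbb R)\times GL_m(\mathbb R)$ be a $G$-compatible pair, i.e. $\sigma\exp\left(\rho^{(j)}\cdot\Delta\right)\sigma^{-1}\in SL_n(\mathbb Z)$ for all $j=1,\dots,m$, where $\rho^{(j)}$ is the $j$-th column of $\rho$. Then $$L_{(\sigma,\rho)}:=\sigma^{-1}\mathbb Z^n\rtimes_\eta\rho\mathbb Z^m=\{(\sigma^{-1}v,\rho p):\ v\in\mathbb Z^n,\ p\in\mathbb Z^m\}\subset G$$ is a lattice in $G$ (a discrete subgroup with $G/L_{(\sigma,\rho)}$ carrying a finite $G$-invariant measure; in fact it is co-compact).
   Context: Fix integers $1\le m\le n$. Let $\Delta_1,\dots,\Delta_m\in\mathbb R^{n\times n}$ be linearly independent, nonsingular, traceless diagonal matrices $\Delta_i=\mathrm{diag}(d_1^{(i)},\dots,d_n^{(i)})$ such that for each $i$, $d_k^{(i)}\neq d_j^{(i)}$ whenever $k\neq j$. For $t=(t_1,\dots,t_m)^T\in\mathbb R^m$ write $t\cdot\Delta=\sum_{i=1}^m t_i\Delta_i$ and $\eta(t)=e^{t\cdot\Delta}$ (matrix exponential). Let $G=\mathbb R^n\rtimes_\eta\mathbb R^m$ be the Lie group with underlying set $\mathbb R^n\times\mathbb R^m$ and multiplication $(x,t)(y,s)=(x+e^{t\cdot\Delta}y,\ t+s)$; the inverse is $(x,t)^{-1}=(-e^{-t\cdot\Delta}x,-t)$. *)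

theory Defs
  imports "HOL-Analysis.Analysis"
begin

definition is_diag :: "real^'n^'n \<Rightarrow> bool" where
  "is_diag A \<longleftrightarrow> (\<forall>k l. k \<noteq> l \<longrightarrow> A $ k $ l = 0)"

definition tdot :: "('m \<Rightarrow> real^'n^'n) \<Rightarrow> real^'m \<Rightarrow> real^'n^'n" where
  "tdot Delta t = (\<Sum>i\<in>UNIV. (t $ i) *\<^sub>R Delta i)"

text \<open>eta(t) = exp(t . Delta); since t . Delta is diagonal (all Delta_i are diagonal),
  its matrix exponential is the diagonal matrix of the exponentials of the diagonal entries.\<close>
definition eta :: "('m \<Rightarrow> real^'n^'n) \<Rightarrow> real^'m \<Rightarrow> real^'n^'n" where
  "eta Delta t = (\<chi> k l. if k = l then exp (tdot Delta t $ k $ k) else 0)"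

definition gmul :: "('m \<Rightarrow> real^'n^'n) \<Rightarrow> ((real^'n) \<times> (real^'m)) \<Rightarrow> ((real^'n) \<times> (real^'m)) \<Rightarrow> ((real^'n) \<times> (real^'m))" where
  "gmul Delta g h = (fst g + eta Delta (snd g) *v fst h, snd g + snd h)"

definition ginv :: "('m \<Rightarrow> real^'n^'n) \<Rightarrow> ((real^'n) \<times> (real^'m)) \<Rightarrow> ((real^'n) \<times> (real^'m))" where
  "ginv Delta g = (- (eta Delta (- snd g) *v fst g), - snd g)"

definition int_vecs :: "(real^'k) set" where
  "int_vecs = {v. \<forall>i. v $ i \<in> \<int>}"

definition SL_int :: "(real^'n^'n) set" where
  "SL_int = {A. (\<forall>i j. A $ i $ j \<in> \<int>) \<and> det A = 1}"

definition G_compatible :: "('m \<Rightarrow> real^'n^'n) \<Rightarrow> real^'n^'n \<Rightarrow> real^'m^'m \<Rightarrow> bool" where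
  "G_compatible Delta \<sigma> \<rho> \<longleftrightarrow> invertible \<sigma> \<and> invertible \<rho> \<and>
     (\<forall>j. \<sigma> ** eta Delta (column j \<rho>) ** matrix_inv \<sigma> \<in> SL_int)"

definition Lsr :: "real^'n^'n \<Rightarrow> real^'m^'m \<Rightarrow> ((real^'n) \<times> (real^'m)) set" where
  "Lsr \<sigma> \<rho> = {(matrix_inv \<sigma> *v v, \<rho> *v p) | v p. v \<in> int_vecs \<and> p \<in> int_vecs}"

text \<open>Here G (as a manifold R^n x R^m) carries Lebesgue measure, which is a (bi-invariant)
  Haar measure since all Delta_i are traceless; finite covolume is expressed by the existence of
  a Borel set of finite Haar measure whose right L-translates cover G.\<close>
definition is_subgroup :: "('m \<Rightarrow> real^'n^'n) \<Rightarrow> ((real^'n) \<times> (real^'m)) set \<Rightarrow> bool" where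
  "is_subgroup Delta L \<longleftrightarrow> (0, 0) \<in> L \<and> (\<forall>g\<in>L. \<forall>h\<in>L. gmul Delta g h \<in> L) \<and>
     (\<forall>g\<in>L. ginv Delta g \<in> L)"

definition discrete_set :: "'a::metric_space set \<Rightarrow> bool" where
  "discrete_set L \<longleftrightarrow> (\<forall>l\<in>L. \<exists>e>0. \<forall>l'\<in>L. dist l' l < e \<longrightarrow> l' = l)"

definition cocompact_lattice :: "('m \<Rightarrow> real^'n^'n) \<Rightarrow> ((real^'n) \<times> (real^'m)) set \<Rightarrow> bool" where
  "cocompact_lattice Delta L \<longleftrightarrow> is_subgroup Delta L \<and> discrete_set L \<and>
     (\<exists>F \<in> sets lborel. emeasure lborel F < \<infinity> \<and> (\<forall>g. \<exists>f\<in>F. \<exists>l\<in>L. g = gmul Delta f l)) \<and>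
     (\<exists>K. compact K \<and> (\<forall>g. \<exists>k\<in>K. \<exists>l\<in>L. g = gmul Delta k l))"

end

theory Submission
  imports Defs "HOL-Analysis.Analysis"
begin


lemma minv:
  assumes "invertible (A::real^'n^'n)"
  shows "A ** matrix_inv A = mat 1" "matrix_inv A ** A = mat 1"
proof -
  have "\<exists>A'. A ** A' = mat 1 \<and> A' ** A = mat 1" using assms unfolding invertible_def by blast
  from someI_ex[OF this] show "A ** matrix_inv A = mat 1" "matrix_inv A ** A = mat 1"
    unfolding matrix_inv_def by auto
qed

lemma minv_vec:
  assumes "invertible (A::real^'n^'n)"
  shows "A *v (matrix_inv A *v x) = x" "matrix_inv A *v (A *v x) = x"
  using minv[OF assms] by (simp_all add: matrix_vector_mul_assoc)

lemma tdot_nth: "tdot D t $ k $ k = (\<Sum>i\<in>UNIV. t $ i * D i $ k $ k)"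
  unfolding tdot_def by (simp add: sum_component)

lemma tdot_add: "tdot D (t + s) = tdot D t + tdot D s"
  unfolding tdot_def by (simp add: scaleR_add_left sum.distrib)

lemma eta_vec: "eta D t *v y = (\<chi> k. exp (tdot D t $ k $ k) * y $ k)"
  unfolding eta_def matrix_vector_mult_def
  by (simp add: vec_eq_iff if_distrib[where f="\<lambda>z. z * _"] sum.delta cong: if_cong)

lemma eta_add_vec: "eta D (t + s) *v y = eta D t *v (eta D s *v y)"
  by (simp add: eta_vec tdot_add exp_add vec_eq_iff)

lemma eta_zero_vec: "eta D 0 *v y = y"
  by (simp add: eta_vec tdot_def vec_eq_iff)

lemma eta_add: "eta D (t + s) = eta D t ** eta D s"
proof -
  have "eta D (t + s) *v y = (eta D t ** eta D s) *v y" for y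
    by (simp add: eta_add_vec matrix_vector_mul_assoc)
  then show ?thesis by (metis matrix_eq)
qed

lemma det_Ints:
  fixes A :: "real^'n^'n"
  assumes "\<forall>i j. A $ i $ j \<in> \<int>"
  shows "det A \<in> \<int>"
  unfolding det_def using assms by (intro Ints_sum Ints_mult Ints_prod) auto

lemma int_mat_vec:
  fixes A :: "real^'n^'n"
  assumes "\<forall>i j. A $ i $ j \<in> \<int>" "v \<in> int_vecs"
  shows "A *v v \<in> int_vecs"
  using assms unfolding int_vecs_def matrix_vector_mult_def by (auto intro!: Ints_sum)

lemma SL_inv_int:
  fixes A :: "real^'n^'n"
  assumes "A \<in> SL_int" "A *v y = w" "w \<in> int_vecs"
  shows "y \<in> int_vecs"
proof -
  have d: "det A = 1" and ai: "\<forall>i j. A $ i $ j \<in> \<int>" using assms(1) unfolding SL_int_def by auto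
  have "y = (\<chi> k. det(\<chi> i j. if j=k then w$i else A$i$j) / det A)"
    using cramer[of A y w] d assms(2) by simp
  then have "y $ k = det(\<chi> i j. if j=k then w$i else A$i$j)" for k using d by simp
  moreover have "det(\<chi> i j. if j=k then w$i else A$i$j) \<in> \<int>" for k
    using ai assms(3) unfolding int_vecs_def by (intro det_Ints) auto
  ultimately show ?thesis unfolding int_vecs_def by auto
qed



lemma int_mult_closed:
  fixes c :: "'a::real_vector"
  assumes "P 0" "\<And>a b. P a \<Longrightarrow> P b \<Longrightarrow> P (a + b)" "P c" "P (- c)" "(k::real) \<in> \<int>"
  shows "P (k *\<^sub>R c)"
proof -
  have nat: "P (real n *\<^sub>R d)" if "P d" for n d
  proof (induction n)
    case 0 have "real 0 *\<^sub>R d = 0" by simp then show ?case using assms(1) by metis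
  next
    case (Suc n) then show ?case using assms(2)[of d "real n *\<^sub>R d"] that by (simp add: scaleR_add_left)
  qed
  obtain z where z: "k = of_int z" using assms(5) Ints_cases by blast
  show ?thesis
  proof (cases "z \<ge> 0")
    case True
    then have "k = real (nat z)" using z by simp
    then show ?thesis using nat[OF assms(3)] by simp
  next
    case False
    then have "k = - real (nat (-z))" using z by simp
    then show ?thesis using nat[OF assms(4), of "nat (-z)"] by simp
  qed
qed

lemma mat_vec_cols: "(A::real^'m^'m) *v p = (\<Sum>j\<in>UNIV. (p $ j) *\<^sub>R column j A)"
  by (simp add: vec_eq_iff matrix_vector_mult_def column_def sum_component mult.commute)

lemma good_rho:
  fixes Delta :: "'m::finite \<Rightarrow> real^'n::finite^'n"
    and \<sigma> :: "real^'n^'n" and \<rho> :: "real^'m^'m"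
  assumes G: "G_compatible Delta \<sigma> \<rho>" and p: "p \<in> int_vecs"
  shows "\<forall>x. \<sigma> *v x \<in> int_vecs \<longrightarrow> \<sigma> *v (eta Delta (\<rho> *v p) *v x) \<in> int_vecs"
proof -
  define P where "P t \<longleftrightarrow> (\<forall>x. \<sigma> *v x \<in> int_vecs \<longrightarrow> \<sigma> *v (eta Delta t *v x) \<in> int_vecs)" for t
  have inv: "invertible \<sigma>" using G unfolding G_compatible_def by auto
  have P0: "P 0" unfolding P_def by (simp add: eta_zero_vec)
  have Padd: "P (a + b)" if "P a" "P b" for a b
    using that unfolding P_def by (simp add: eta_add_vec)
  have Pc: "P (column j \<rho>) \<and> P (- column j \<rho>)" for j
  proof -
    let ?c = "column j \<rho>"
    define A where "A = \<sigma> ** eta Delta ?c ** matrix_inv \<sigma>"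
    have A: "A \<in> SL_int" using G unfolding G_compatible_def A_def by auto
    have Av: "A *v (\<sigma> *v x) = \<sigma> *v (eta Delta ?c *v x)" for x
      unfolding A_def by (simp add: matrix_vector_mul_assoc[symmetric] minv_vec[OF inv])
    have 1: "P ?c" unfolding P_def
    proof (intro allI impI)
      fix x assume "\<sigma> *v x \<in> int_vecs"
      then show "\<sigma> *v (eta Delta ?c *v x) \<in> int_vecs"
        using int_mat_vec[of A] A unfolding SL_int_def by (metis (mono_tags, lifting) Av mem_Collect_eq)
    qed
    have 2: "P (- ?c)" unfolding P_def
    proof (intro allI impI)
      fix x assume x: "\<sigma> *v x \<in> int_vecs"
      have "A *v (\<sigma> *v (eta Delta (- ?c) *v x)) = \<sigma> *v x"
        unfolding Av by (simp add: eta_add_vec[symmetric] eta_zero_vec)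
      then show "\<sigma> *v (eta Delta (- ?c) *v x) \<in> int_vecs"
        using SL_inv_int[OF A _ x] by blast
    qed
    show ?thesis using 1 2 by blast
  qed
  have Pmul: "P ((p $ j) *\<^sub>R column j \<rho>)" for j
    using p Pc unfolding int_vecs_def by (intro int_mult_closed[where P=P] P0 Padd) auto
  have "P (\<Sum>j\<in>F. (p $ j) *\<^sub>R column j \<rho>)" for F :: "'m set"
  proof (induction F rule: infinite_finite_induct)
    case (infinite A) then show ?case using P0 by simp
  next
    case empty then show ?case using P0 by simp
  next
    case (insert x F) then show ?case using Padd Pmul by simp
  qed
  then have "P (\<rho> *v p)" by (simp only: mat_vec_cols)
  then show ?thesis unfolding P_def by blast
qed



lemma int_vecs_add: "v \<in> int_vecs \<Longrightarrow> w \<in> int_vecs \<Longrightarrow> v + w \<in> int_vecs"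
  and int_vecs_neg: "v \<in> int_vecs \<Longrightarrow> - v \<in> int_vecs"
  and int_vecs_0: "0 \<in> int_vecs"
  unfolding int_vecs_def by auto

lemma mv_neg: "(A::real^'a^'b) *v (- x) = - (A *v x)"
  by (simp add: vec_eq_iff matrix_vector_mult_def sum_negf)

lemma subgroup_L:
  fixes Delta :: "'m::finite \<Rightarrow> real^'n::finite^'n"
    and \<sigma> :: "real^'n^'n" and \<rho> :: "real^'m^'m"
  assumes G: "G_compatible Delta \<sigma> \<rho>"
  shows "is_subgroup Delta (Lsr \<sigma> \<rho>)"
proof -
  have inv: "invertible \<sigma>" using G unfolding G_compatible_def by auto
  let ?Si = "matrix_inv \<sigma>"
  have "(0, 0) \<in> Lsr \<sigma> \<rho>" unfolding Lsr_def
    by (rule CollectI, rule exI[of _ 0], rule exI[of _ 0]) (simp add: int_vecs_0)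
  moreover have "gmul Delta g h \<in> Lsr \<sigma> \<rho>" if gh: "g \<in> Lsr \<sigma> \<rho>" "h \<in> Lsr \<sigma> \<rho>" for g h
  proof -
    obtain v p where g: "g = (?Si *v v, \<rho> *v p)" "v \<in> int_vecs" "p \<in> int_vecs"
      using gh(1) unfolding Lsr_def by blast
    obtain w q where h: "h = (?Si *v w, \<rho> *v q)" "w \<in> int_vecs" "q \<in> int_vecs"
      using gh(2) unfolding Lsr_def by blast
    define v' where "v' = v + \<sigma> *v (eta Delta (\<rho> *v p) *v (?Si *v w))"
    have "\<sigma> *v (eta Delta (\<rho> *v p) *v (?Si *v w)) \<in> int_vecs"
      using good_rho[OF G g(3)] h(2) minv_vec[OF inv] by simp
    then have v': "v' \<in> int_vecs" using g(2) int_vecs_add v'_def by blast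
    have "gmul Delta g h = (?Si *v v', \<rho> *v (p + q))"
      unfolding gmul_def g h v'_def
      by (simp add: matrix_vector_right_distrib minv_vec[OF inv])
    then show ?thesis unfolding Lsr_def using v' g(3) h(3) int_vecs_add by blast
  qed
  moreover have "ginv Delta g \<in> Lsr \<sigma> \<rho>" if gh: "g \<in> Lsr \<sigma> \<rho>" for g
  proof -
    obtain v p where g: "g = (?Si *v v, \<rho> *v p)" "v \<in> int_vecs" "p \<in> int_vecs"
      using gh(1) unfolding Lsr_def by blast
    define v' where "v' = - (\<sigma> *v (eta Delta (\<rho> *v (-p)) *v (?Si *v v)))"
    have "\<sigma> *v (eta Delta (\<rho> *v (-p)) *v (?Si *v v)) \<in> int_vecs"
      using good_rho[OF G int_vecs_neg[OF g(3)]] g(2) minv_vec[OF inv] by simp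
    then have v': "v' \<in> int_vecs" using int_vecs_neg v'_def by blast
    have "ginv Delta g = (?Si *v v', \<rho> *v (- p))"
      unfolding ginv_def g v'_def
      by (simp add: mv_neg minv_vec[OF inv])
    then show ?thesis unfolding Lsr_def using v' g(3) int_vecs_neg by blast
  qed
  ultimately show ?thesis unfolding is_subgroup_def by blast
qed



lemma int_vec_norm: "w \<in> int_vecs \<Longrightarrow> w \<noteq> 0 \<Longrightarrow> 1 \<le> norm (w::real^'k)"
proof -
  assume w: "w \<in> int_vecs" "w \<noteq> 0"
  then obtain i where "w $ i \<noteq> 0" by (metis vec_eq_iff zero_index)
  then have "1 \<le> \<bar>w $ i\<bar>" using w(1) unfolding int_vecs_def by (simp add: Ints_nonzero_abs_ge1)
  then show ?thesis using component_le_norm_cart[of w i] by linarith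
qed

lemma inv_bound:
  fixes A :: "real^'k^'k"
  assumes "invertible A"
  shows "\<exists>B>0. \<forall>v w. v \<in> int_vecs \<longrightarrow> w \<in> int_vecs \<longrightarrow> v \<noteq> w \<longrightarrow>
      1 \<le> B * norm (matrix_inv A *v v - matrix_inv A *v w)"
proof -
  obtain B where B: "B > 0" "\<And>x. norm (A *v x) \<le> B * norm x"
    using linear_bounded_pos[OF matrix_vector_mul_linear[of A]] by blast
  have "1 \<le> B * norm (matrix_inv A *v v - matrix_inv A *v w)"
    if "v \<in> int_vecs" "w \<in> int_vecs" "v \<noteq> w" for v w
  proof -
    have "v - w \<in> int_vecs" using that int_vecs_add int_vecs_neg by (metis diff_conv_add_uminus)
    then have "1 \<le> norm (v - w)" using int_vec_norm that(3) by (metis right_minus_eq)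
    also have "v - w = A *v (matrix_inv A *v v - matrix_inv A *v w)"
      by (simp add: matrix_vector_mult_diff_distrib minv_vec[OF assms])
    finally show ?thesis using B(2) order_trans by blast
  qed
  then show ?thesis using B(1) by blast
qed

lemma invertible_inv: "invertible (A::real^'k^'k) \<Longrightarrow> invertible (matrix_inv A)"
  using minv unfolding invertible_def by blast

lemma discrete_L:
  fixes \<sigma> :: "real^'n::finite^'n" and \<rho> :: "real^'m::finite^'m"
  assumes "invertible \<sigma>" "invertible \<rho>"
  shows "discrete_set (Lsr \<sigma> \<rho>)"
proof -
  obtain B1 where B1: "B1 > 0" "\<And>v w. v \<in> int_vecs \<Longrightarrow> w \<in> int_vecs \<Longrightarrow> v \<noteq> w \<Longrightarrow>
      1 \<le> B1 * norm (matrix_inv \<sigma> *v v - matrix_inv \<sigma> *v w)"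
    using inv_bound[OF assms(1)] by blast
  have rr: "matrix_inv (matrix_inv \<rho>) = \<rho>"
  proof -
    have "matrix_inv (matrix_inv \<rho>) = (\<rho> ** matrix_inv \<rho>) ** matrix_inv (matrix_inv \<rho>)"
      using minv[OF assms(2)] by simp
    also have "\<dots> = \<rho>" using minv[OF invertible_inv[OF assms(2)]]
      by (simp add: matrix_mul_assoc[symmetric])
    finally show ?thesis .
  qed
  obtain B2 where B2: "B2 > 0" "\<And>v w. v \<in> int_vecs \<Longrightarrow> w \<in> int_vecs \<Longrightarrow> v \<noteq> w \<Longrightarrow>
      1 \<le> B2 * norm (\<rho> *v v - \<rho> *v w)"
    using inv_bound[OF invertible_inv[OF assms(2)]] unfolding rr by blast
  show ?thesis unfolding discrete_set_def
  proof
    fix l assume "l \<in> Lsr \<sigma> \<rho>"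
    then obtain v p where l: "l = (matrix_inv \<sigma> *v v, \<rho> *v p)" "v \<in> int_vecs" "p \<in> int_vecs"
      unfolding Lsr_def by blast
    define e where "e = min (1/B1) (1/B2)"
    have "e > 0" using B1 B2 e_def by simp
    moreover have "l' = l" if l'L: "l' \<in> Lsr \<sigma> \<rho>" and d: "dist l' l < e" for l'
    proof (rule ccontr)
      assume ne: "l' \<noteq> l"
      obtain v' p' where l': "l' = (matrix_inv \<sigma> *v v', \<rho> *v p')" "v' \<in> int_vecs" "p' \<in> int_vecs"
        using l'L unfolding Lsr_def by blast
      have dd: "dist l' l = norm (matrix_inv \<sigma> *v v' - matrix_inv \<sigma> *v v, \<rho> *v p' - \<rho> *v p)"
        unfolding l l' dist_norm by simp
      show False
      proof (cases "v' = v")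
        case False
        have "1 \<le> B1 * norm (matrix_inv \<sigma> *v v' - matrix_inv \<sigma> *v v)" using B1(2) False l l' by blast
        also have "\<dots> \<le> B1 * dist l' l" unfolding dd using B1(1) norm_fst_le by (simp add: mult_left_mono)
        also have "\<dots> < B1 * e" using d B1(1) by simp
        also have "\<dots> \<le> 1" using B1(1) e_def by (simp add: field_simps min_def)
        finally show False by simp
      next
        case True
        then have "p' \<noteq> p" using ne l l' by auto
        have "1 \<le> B2 * norm (\<rho> *v p' - \<rho> *v p)" using B2(2) \<open>p' \<noteq> p\<close> l l' by blast
        also have "\<dots> \<le> B2 * dist l' l" unfolding dd using B2(1) norm_snd_le by (simp add: mult_left_mono)
        also have "\<dots> < B2 * e" using d B2(1) by simp
        also have "\<dots> \<le> 1" using B2(1) e_def by (simp add: field_simps min_def)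
        finally show False by simp
      qed
    qed
    ultimately show "\<exists>e>0. \<forall>l'\<in>Lsr \<sigma> \<rho>. dist l' l < e \<longrightarrow> l' = l" by blast
  qed
qed




lemma floor_vec:
  fixes z :: "real^'k"
  shows "(\<chi> i. of_int \<lfloor>z$i\<rfloor>) \<in> int_vecs" "z - (\<chi> i. of_int \<lfloor>z$i\<rfloor>) \<in> cbox 0 (\<chi> i. 1)"
  unfolding int_vecs_def mem_box_cart by (auto simp: of_int_floor_le) linarith

lemma cover_K:
  fixes Delta :: "'m::finite \<Rightarrow> real^'n::finite^'n"
    and \<sigma> :: "real^'n^'n" and \<rho> :: "real^'m^'m"
  assumes inv: "invertible \<sigma>" "invertible \<rho>"
  defines "K \<equiv> (\<lambda>(a,b). (eta Delta (\<rho> *v b) *v (matrix_inv \<sigma> *v a), \<rho> *v b)) `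
     (cbox (0::real^'n) (\<chi> i. 1) \<times> cbox (0::real^'m) (\<chi> i. 1))"
  shows "compact K" "\<forall>g. \<exists>k\<in>K. \<exists>l\<in>Lsr \<sigma> \<rho>. g = gmul Delta k l"
proof -
  let ?Si = "matrix_inv \<sigma>"
  define f where "f = (\<lambda>z::((real^'n) \<times> (real^'m)). (((\<chi> k. exp (\<Sum>i\<in>UNIV. (\<Sum>j\<in>UNIV. \<rho>$i$j * snd z $ j) * Delta i $ k $ k)
     * (\<Sum>j\<in>UNIV. ?Si$k$j * fst z $ j))), (\<chi> i. \<Sum>j\<in>UNIV. \<rho>$i$j * snd z $ j)))"
  have fe: "(\<lambda>(a,b). (eta Delta (\<rho> *v b) *v (?Si *v a), \<rho> *v b)) = f"
    unfolding f_def eta_vec tdot_nth by (auto simp: fun_eq_iff matrix_vector_mult_def)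
  have "continuous_on UNIV f" unfolding f_def
    by (intro continuous_intros)
  then show "compact K" unfolding K_def fe
    by (intro compact_continuous_image compact_Times compact_cbox) (auto intro: continuous_on_subset)
  show "\<forall>g. \<exists>k\<in>K. \<exists>l\<in>Lsr \<sigma> \<rho>. g = gmul Delta k l"
  proof
    fix g :: "(real^'n) \<times> (real^'m)"
    obtain x t where g: "g = (x, t)" by fastforce
    define b0 where "b0 = matrix_inv \<rho> *v t"
    define p where "p = (\<chi> i. (of_int \<lfloor>b0$i\<rfloor> :: real))"
    define b where "b = b0 - p"
    define s where "s = \<rho> *v b"
    define z where "z = \<sigma> *v (eta Delta (-s) *v x)"
    define v where "v = (\<chi> i. (of_int \<lfloor>z$i\<rfloor> :: real))"
    define a where "a = z - v"
    have ts: "t = s + \<rho> *v p" unfolding s_def b_def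
      by (simp add: matrix_vector_mult_diff_distrib b0_def minv_vec[OF inv(2)])
    have xs: "x = eta Delta s *v (?Si *v a) + eta Delta s *v (?Si *v v)"
    proof -
      have "eta Delta s *v (?Si *v a) + eta Delta s *v (?Si *v v) = eta Delta s *v (?Si *v (a + v))"
        by (simp add: matrix_vector_right_distrib)
      also have "\<dots> = eta Delta s *v (eta Delta (- s) *v x)"
      proof -
        have "a + v = z" unfolding a_def by (rule diff_add_cancel)
        moreover have "?Si *v z = eta Delta (- s) *v x" unfolding z_def by (rule minv_vec(2)[OF inv(1)])
        ultimately show ?thesis by (simp only:)
      qed
      also have "\<dots> = eta Delta (s + - s) *v x" by (simp only: eta_add_vec)
      finally show ?thesis by (simp add: eta_zero_vec)
    qed
    have ab: "(a, b) \<in> cbox (0::real^'n) (\<chi> i. 1) \<times> cbox (0::real^'m) (\<chi> i. 1)"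
    proof -
      have "a \<in> cbox (0::real^'n) (\<chi> i. 1)" unfolding a_def v_def by (rule floor_vec(2))
      moreover have "b \<in> cbox (0::real^'m) (\<chi> i. 1)" unfolding b_def p_def by (rule floor_vec(2))
      ultimately show ?thesis by simp
    qed
    have kK: "(eta Delta s *v (?Si *v a), s) \<in> K"
      unfolding K_def s_def using ab by (rule rev_image_eqI) simp
    have vi: "v \<in> int_vecs" unfolding v_def by (rule floor_vec(1))
    have pi: "p \<in> int_vecs" unfolding p_def by (rule floor_vec(1))
    have lL: "(?Si *v v, \<rho> *v p) \<in> Lsr \<sigma> \<rho>" unfolding Lsr_def using vi pi by blast
    have "g = gmul Delta (eta Delta s *v (?Si *v a), s) (?Si *v v, \<rho> *v p)"
      unfolding gmul_def g using xs ts by simp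
    then show "\<exists>k\<in>K. \<exists>l\<in>Lsr \<sigma> \<rho>. g = gmul Delta k l" using kK lL by blast
  qed
qed

theorem mainTheorem1:
  fixes Delta :: "'m::finite \<Rightarrow> real^'n::finite^'n"
    and \<sigma> :: "real^'n^'n" and \<rho> :: "real^'m^'m"
  assumes "CARD('m) \<le> CARD('n)"
    and "\<forall>c. (\<Sum>i\<in>UNIV. c i *\<^sub>R Delta i) = 0 \<longrightarrow> (\<forall>i. c i = 0)"
    and "\<forall>i. is_diag (Delta i)"
    and "\<forall>i. invertible (Delta i)"
    and "\<forall>i. trace (Delta i) = 0"
    and "\<forall>i k l. k \<noteq> l \<longrightarrow> Delta i $ k $ k \<noteq> Delta i $ l $ l"
    and "G_compatible Delta \<sigma> \<rho>"
  shows "cocompact_lattice Delta (Lsr \<sigma> \<rho>)"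
proof -
  have inv: "invertible \<sigma>" "invertible \<rho>" using assms(7) unfolding G_compatible_def by auto
  obtain K where K: "compact K" "\<forall>g. \<exists>k\<in>K. \<exists>l\<in>Lsr \<sigma> \<rho>. g = gmul Delta k l"
    using cover_K[OF inv, of Delta] by blast
  have "K \<in> sets lborel" "emeasure lborel K < \<infinity>"
    using K(1) borel_compact emeasure_compact_finite by auto
  then show ?thesis unfolding cocompact_lattice_def
    using subgroup_L[OF assms(7)] discrete_L[OF inv] K by blast
qed

end
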